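(* Let $S^\star\in\mathbb R^{d\times d}$ have at most $s$ nonzero entries in total and at most $\alpha d$ nonzero entries in every row and every column, let $\Delta^\star,\hat\Delta\in\mathbb R^{d\times d}$ be arbitrary, and let $R^\star=\Delta^\star-S^\star$. Let $\hat\alpha\ge\alpha$, let $\hat s\ge s$ be an integer, and let $S^0=\mathcal T_{\hat\alpha}\{\mathcal J_{\hat s}(\hat\Delta)\}$. Then $$\|S^0-S^\star\|_{\infty,\infty}\le3\|\hat\Delta-\Delta^\star\|_{\infty,\infty}+3\|R^\star\|_{\infty,\infty},\qquad \|S^0-S^\star\|_F\le(2\hat s)^{1/2}\|S^0-S^\star\|_{\infty,\infty}.$$
   Context: $\|A\|_{\infty,\infty}=\max_{i,j}|A_{ij}|$; $\|\cdot\|_F$ is the Frobenius norm. $\mathcal J_s(A)$ keeps the $s$ entries of $A$ largest in absolute value and sets the others to zero; $\mathcal T_\alpha(A)$ keeps $A_{ij}$ iff $|A_{ij}|$ is among the $\lfloor\alpha d\rfloor$ largest absolute values in row $i$ and also among the $\lfloor\alpha d\rfloor$ largest absolute values in column $j$, and sets the other entries to zero (ties broken arbitrarily). *)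

theory Defs
  imports "HOL-Analysis.Analysis"
begin

text \<open>d x d real matrices are rendered as real^'n^'n, with d = CARD('n).\<close>

definition maxnorm :: "real^'n^'n \<Rightarrow> real" where
  "maxnorm A = Max {\<bar>A $ i $ j\<bar> | i j. True}"

definition frob :: "real^'n^'n \<Rightarrow> real" where
  "frob A = sqrt (\<Sum>i\<in>UNIV. \<Sum>j\<in>UNIV. (A $ i $ j)^2)"

definition top_set :: "nat \<Rightarrow> ('a \<Rightarrow> real) \<Rightarrow> 'a set \<Rightarrow> 'a set \<Rightarrow> bool" where
  "top_set k f U K \<longleftrightarrow> K \<subseteq> U \<and> card K = min k (card U) \<and>
     (\<forall>x\<in>K. \<forall>y\<in>U - K. f y \<le> f x)"

text \<open>B is a (tie-breaking choice of) J_s(A).\<close>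
definition is_J :: "nat \<Rightarrow> real^'n^'n \<Rightarrow> real^'n^'n \<Rightarrow> bool" where
  "is_J s A B \<longleftrightarrow> (\<exists>K. top_set s (\<lambda>(i,j). \<bar>A $ i $ j\<bar>) UNIV K \<and>
     (\<forall>i j. B $ i $ j = (if (i,j) \<in> K then A $ i $ j else 0)))"

text \<open>B is a (tie-breaking choice of) T_alpha(A), keeping floor(alpha d) per row and column.\<close>
definition is_T :: "real \<Rightarrow> real^'n^'n \<Rightarrow> real^'n^'n \<Rightarrow> bool" where
  "is_T a A B \<longleftrightarrow> (let k = nat \<lfloor>a * real CARD('n)\<rfloor> in
     \<exists>Rw Cl. (\<forall>i. top_set k (\<lambda>j. \<bar>A $ i $ j\<bar>) UNIV (Rw i)) \<and>
             (\<forall>j. top_set k (\<lambda>i. \<bar>A $ i $ j\<bar>) UNIV (Cl j)) \<and>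
             (\<forall>i j. B $ i $ j = (if j \<in> Rw i \<and> i \<in> Cl j then A $ i $ j else 0)))"

end

theory Submission
  imports Defs
begin

lemma fin_max: "finite {\<bar>A $ i $ j\<bar> | i j. True}" for A :: "real^'n^'n"
proof -
  have "{\<bar>A $ i $ j\<bar> | i j. True} \<subseteq> (\<lambda>p. \<bar>A $ fst p $ snd p\<bar>) ` UNIV"
  proof
    fix x assume "x \<in> {\<bar>A $ i $ j\<bar> | i j. True}"
    then obtain i j where "x = \<bar>A $ i $ j\<bar>" by blast
    then show "x \<in> (\<lambda>p. \<bar>A $ fst p $ snd p\<bar>) ` UNIV" by (intro image_eqI[of _ _ "(i,j)"]) auto
  qed
  then show ?thesis by (rule finite_subset) simp
qed

lemma maxnorm_ge: "\<bar>A $ i $ j\<bar> \<le> maxnorm (A::real^'n^'n)"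
  unfolding maxnorm_def by (rule Max_ge[OF fin_max]) (rule CollectI, rule exI[of _ i], rule exI[of _ j], simp)

lemma maxnorm_le: assumes "\<And>i j. \<bar>(A::real^'n^'n) $ i $ j\<bar> \<le> c" shows "maxnorm A \<le> c"
  unfolding maxnorm_def
proof (rule Max.boundedI[OF fin_max])
  show "{\<bar>A $ i $ j\<bar> | i j. True} \<noteq> {}" by blast
  fix x assume "x \<in> {\<bar>A $ i $ j\<bar> | i j. True}"
  then obtain i j where "x = \<bar>A $ i $ j\<bar>" by blast
  then show "x \<le> c" using assms by simp
qed

lemma maxnorm_nonneg: "0 \<le> maxnorm (A::real^'n^'n)"
proof -
  have "\<bar>A $ undefined $ undefined\<bar> \<le> maxnorm A" by (rule maxnorm_ge)
  moreover have "0 \<le> \<bar>A $ undefined $ undefined\<bar>" by simp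
  ultimately show ?thesis by linarith
qed

lemma top_escape:
  assumes "top_set k f U K" "finite U" "x \<in> U" "x \<notin> K" "S \<subseteq> U" "card S \<le> k" "x \<in> S"
  shows "\<exists>y\<in>K. y \<notin> S \<and> f x \<le> f y"
proof -
  have KU: "K \<subseteq> U" and cK: "card K = min k (card U)" and dom: "\<forall>a\<in>K. \<forall>b\<in>U - K. f b \<le> f a"
    using assms(1) unfolding top_set_def by auto
  have fS: "finite S" using assms(5,2) by (rule finite_subset)
  have cSU: "card S \<le> card U" using assms(2,5) by (rule card_mono)
  have "\<not> K \<subseteq> S"
  proof
    assume "K \<subseteq> S"
    then have "K \<subseteq> S - {x}" using assms(4) by blast
    then have "card K \<le> card (S - {x})" by (rule card_mono[rotated]) (use fS in simp)
    also have "\<dots> < card S" using fS assms(7) by (rule card_Diff1_less)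
    finally show False using cK cSU assms(6) by linarith
  qed
  then obtain y where "y \<in> K" "y \<notin> S" by blast
  then show ?thesis using dom assms(3,4) by blast
qed

theorem mainTheorem7:
  fixes Sstar Dstar Dhat J S0 :: "real^'n^'n"
    and s shat :: nat and alpha ahat :: real
  assumes "card {(i,j). Sstar $ i $ j \<noteq> 0} \<le> s"
    and "\<forall>i. real (card {j. Sstar $ i $ j \<noteq> 0}) \<le> alpha * real CARD('n)"
    and "\<forall>j. real (card {i. Sstar $ i $ j \<noteq> 0}) \<le> alpha * real CARD('n)"
    and "ahat \<ge> alpha" and "shat \<ge> s"
    and "is_J shat Dhat J" and "is_T ahat J S0"
  shows "maxnorm (S0 - Sstar) \<le> 3 * maxnorm (Dhat - Dstar) + 3 * maxnorm (Dstar - Sstar)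
       \<and> frob (S0 - Sstar) \<le> sqrt (2 * real shat) * maxnorm (S0 - Sstar)"
proof -
  define e where "e = maxnorm (Dhat - Dstar)"
  define r where "r = maxnorm (Dstar - Sstar)"
  define \<delta> where "\<delta> = e + r"
  have e0: "e \<ge> 0" unfolding e_def by (rule maxnorm_nonneg)
  have r0: "r \<ge> 0" unfolding r_def by (rule maxnorm_nonneg)
  have close: "\<bar>Dhat $ i $ j - Sstar $ i $ j\<bar> \<le> \<delta>" for i j
  proof -
    have "\<bar>Dhat $ i $ j - Dstar $ i $ j\<bar> \<le> e" unfolding e_def using maxnorm_ge[of "Dhat - Dstar" i j] by simp
    moreover have "\<bar>Dstar $ i $ j - Sstar $ i $ j\<bar> \<le> r" unfolding r_def using maxnorm_ge[of "Dstar - Sstar" i j] by simp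
    ultimately show ?thesis unfolding \<delta>_def by linarith
  qed
  have zsmall: "Sstar $ i $ j = 0 \<Longrightarrow> \<bar>Dhat $ i $ j\<bar> \<le> \<delta>" for i j using close[of i j] by simp
  have exK: "\<exists>K. top_set shat (\<lambda>(i,j). \<bar>Dhat $ i $ j\<bar>) UNIV K \<and>
     (\<forall>i j. J $ i $ j = (if (i,j) \<in> K then Dhat $ i $ j else 0))"
    using assms(6) unfolding is_J_def .
  then obtain K where HK: "top_set shat (\<lambda>(i,j). \<bar>Dhat $ i $ j\<bar>) UNIV K \<and>
     (\<forall>i j. J $ i $ j = (if (i,j) \<in> K then Dhat $ i $ j else 0))" by (elim exE)
  have topK: "top_set shat (\<lambda>(i,j). \<bar>Dhat $ i $ j\<bar>) UNIV K" using HK by (rule conjunct1)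
  have Jd: "\<And>i j. J $ i $ j = (if (i,j) \<in> K then Dhat $ i $ j else 0)" using HK[THEN conjunct2] by simp
  define k where "k = nat \<lfloor>ahat * real CARD('n)\<rfloor>"
  have exR: "\<exists>Rw Cl. (\<forall>i. top_set k (\<lambda>j. \<bar>J $ i $ j\<bar>) UNIV (Rw i)) \<and>
             (\<forall>j. top_set k (\<lambda>i. \<bar>J $ i $ j\<bar>) UNIV (Cl j)) \<and>
             (\<forall>i j. S0 $ i $ j = (if j \<in> Rw i \<and> i \<in> Cl j then J $ i $ j else 0))"
    using assms(7) unfolding is_T_def Let_def k_def .
  then obtain Rw Cl where HR: "(\<forall>i. top_set k (\<lambda>j. \<bar>J $ i $ j\<bar>) UNIV (Rw i)) \<and>
             (\<forall>j. top_set k (\<lambda>i. \<bar>J $ i $ j\<bar>) UNIV (Cl j)) \<and>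
             (\<forall>i j. S0 $ i $ j = (if j \<in> Rw i \<and> i \<in> Cl j then J $ i $ j else 0))" by (elim exE)
  have topR: "\<And>i. top_set k (\<lambda>j. \<bar>J $ i $ j\<bar>) UNIV (Rw i)" using HR by simp
  have topC: "\<And>j. top_set k (\<lambda>i. \<bar>J $ i $ j\<bar>) UNIV (Cl j)" using HR by simp
  have Sd: "\<And>i j. S0 $ i $ j = (if j \<in> Rw i \<and> i \<in> Cl j then J $ i $ j else 0)" using HR by simp
  have Jsmall: "\<bar>J $ i $ j\<bar> \<le> \<bar>Dhat $ i $ j\<bar>" for i j using Jd[of i j] by auto
  have cardk: "real c \<le> alpha * real CARD('n) \<Longrightarrow> c \<le> k" for c
  proof -
    assume "real c \<le> alpha * real CARD('n)"
    moreover have "alpha * real CARD('n) \<le> ahat * real CARD('n)" using assms(4) by (simp add: mult_right_mono)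
    ultimately have "real c \<le> ahat * real CARD('n)" by linarith
    then have "int c \<le> \<lfloor>ahat * real CARD('n)\<rfloor>" by (simp add: le_floor_iff)
    then show "c \<le> k" unfolding k_def by linarith
  qed
  have entry: "\<bar>S0 $ i $ j - Sstar $ i $ j\<bar> \<le> 2 * \<delta>" for i j
  proof (cases "j \<in> Rw i \<and> i \<in> Cl j \<and> (i,j) \<in> K")
    case True
    then have "S0 $ i $ j = Dhat $ i $ j" using Sd[of i j] Jd[of i j] by simp
    then show ?thesis using close[of i j] e0 r0 unfolding \<delta>_def by simp
  next
    case False
    then have S00: "S0 $ i $ j = 0" using Sd[of i j] Jd[of i j] by auto
    show ?thesis
    proof (cases "Sstar $ i $ j = 0")
      case True then show ?thesis using S00 e0 r0 unfolding \<delta>_def by simp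
    next
      case nz: False
      have D: "\<bar>Dhat $ i $ j\<bar> \<le> \<delta>"
      proof (cases "(i,j) \<in> K")
        case False
        have "card {(i,j). Sstar $ i $ j \<noteq> 0} \<le> shat" using assms(1,5) by linarith
        have "(i,j) \<in> {(i,j). Sstar $ i $ j \<noteq> 0}" using nz by simp
        from top_escape[OF topK finite UNIV_I False subset_UNIV \<open>card _ \<le> shat\<close> this] obtain y where
          "y \<in> K" "y \<notin> {(i,j). Sstar $ i $ j \<noteq> 0}"
          "(\<lambda>(i,j). \<bar>Dhat $ i $ j\<bar>) (i,j) \<le> (\<lambda>(i,j). \<bar>Dhat $ i $ j\<bar>) y" by blast
        moreover obtain a b where "y = (a,b)" by fastforce
        ultimately have "Sstar $ a $ b = 0" "\<bar>Dhat $ i $ j\<bar> \<le> \<bar>Dhat $ a $ b\<bar>" by auto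
        then show ?thesis using zsmall[of a b] by linarith
      next
        case inK: True
        then have Jij: "J $ i $ j = Dhat $ i $ j" using Jd[of i j] by simp
        show ?thesis
        proof (cases "j \<in> Rw i")
          case False
          have "card {j. Sstar $ i $ j \<noteq> 0} \<le> k" using cardk assms(2) by simp
          have "j \<in> {j. Sstar $ i $ j \<noteq> 0}" using nz by simp
          from top_escape[OF topR finite UNIV_I False subset_UNIV \<open>card _ \<le> k\<close> this] obtain y where
            "Sstar $ i $ y = 0" "\<bar>J $ i $ j\<bar> \<le> \<bar>J $ i $ y\<bar>" by blast
          then show ?thesis using Jij Jsmall[of i y] zsmall[of i y] by linarith
        next
          case True
          then have F: "i \<notin> Cl j" using False inK by blast
          have "card {i. Sstar $ i $ j \<noteq> 0} \<le> k" using cardk assms(3) by simp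
          have "i \<in> {i. Sstar $ i $ j \<noteq> 0}" using nz by simp
          from top_escape[OF topC finite UNIV_I F subset_UNIV \<open>card _ \<le> k\<close> this] obtain y where
            "Sstar $ y $ j = 0" "\<bar>J $ i $ j\<bar> \<le> \<bar>J $ y $ j\<bar>" by blast
          then show ?thesis using Jij Jsmall[of y j] zsmall[of y j] by linarith
        qed
      qed
      then show ?thesis using close[of i j] S00 by linarith
    qed
  qed
  have part1: "maxnorm (S0 - Sstar) \<le> 3 * e + 3 * r"
  proof (rule maxnorm_le)
    fix i j show "\<bar>(S0 - Sstar) $ i $ j\<bar> \<le> 3 * e + 3 * r" using entry[of i j] e0 r0 unfolding \<delta>_def by simp
  qed
  define m where "m = maxnorm (S0 - Sstar)"
  have m0: "m \<ge> 0" unfolding m_def by (rule maxnorm_nonneg)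
  define T where "T = K \<union> {(i,j). Sstar $ i $ j \<noteq> 0}"
  have cK: "card K \<le> shat" using topK unfolding top_set_def by simp
  have cT: "card T \<le> 2 * shat"
  proof -
    have "card T \<le> card K + card {(i,j). Sstar $ i $ j \<noteq> 0}" unfolding T_def by (rule card_Un_le)
    then show ?thesis using cK assms(1,5) by linarith
  qed
  have supp: "(S0 - Sstar) $ i $ j \<noteq> 0 \<Longrightarrow> (i,j) \<in> T" for i j
    using Sd[of i j] Jd[of i j] unfolding T_def by (auto split: if_splits)
  have "(\<Sum>i\<in>UNIV. \<Sum>j\<in>UNIV. ((S0 - Sstar) $ i $ j)^2) = (\<Sum>(i,j)\<in>UNIV. ((S0 - Sstar) $ i $ j)^2)"
    by (simp add: sum.cartesian_product UNIV_Times_UNIV[symmetric] del: UNIV_Times_UNIV)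
  also have "\<dots> = (\<Sum>(i,j)\<in>T. ((S0 - Sstar) $ i $ j)^2)"
  proof (rule sum.mono_neutral_right)
    show "\<forall>x\<in>UNIV - T. (case x of (i,j) \<Rightarrow> ((S0 - Sstar) $ i $ j)^2) = 0"
    proof
      fix x assume "x \<in> UNIV - T"
      moreover obtain a b where x: "x = (a,b)" by fastforce
      ultimately have "(a,b) \<notin> T" by simp
      then have "(S0 - Sstar) $ a $ b = 0" using supp[of a b] by blast
      then show "(case x of (i,j) \<Rightarrow> ((S0 - Sstar) $ i $ j)^2) = 0" using x by simp
    qed
  qed auto
  also have "\<dots> \<le> (\<Sum>(i,j)\<in>T. m^2)"
  proof (rule sum_mono)
    fix x assume "x \<in> T"
    obtain i j where x: "x = (i,j)" by fastforce
    have "\<bar>(S0 - Sstar) $ i $ j\<bar> \<le> m" unfolding m_def by (rule maxnorm_ge)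
    then have "((S0 - Sstar) $ i $ j)^2 \<le> m^2"
      by (metis abs_ge_zero power2_abs power_mono)
    then show "(case x of (i,j) \<Rightarrow> ((S0 - Sstar) $ i $ j)^2) \<le> (case x of (i,j) \<Rightarrow> m^2)" using x by simp
  qed
  also have "\<dots> = real (card T) * m^2" by simp
  also have "\<dots> \<le> (2 * real shat) * m^2" using cT by (simp add: mult_right_mono)
  finally have sumle: "(\<Sum>i\<in>UNIV. \<Sum>j\<in>UNIV. ((S0 - Sstar) $ i $ j)^2) \<le> (2 * real shat) * m^2" .
  have "frob (S0 - Sstar) \<le> sqrt ((2 * real shat) * m^2)" unfolding frob_def
    using sumle by (rule real_sqrt_le_mono)
  also have "\<dots> = sqrt (2 * real shat) * m" using m0 by (simp add: real_sqrt_mult)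
  finally have part2: "frob (S0 - Sstar) \<le> sqrt (2 * real shat) * m" .
  show ?thesis using part1 part2 unfolding m_def e_def r_def by simp
qed

end
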